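(* $3/5<\hat q^2<2/3$.
   Context: For $q\in[0,1)$, $\mathrm{K}(q)=\int_0^{\pi/2}(1-q^2\sin^2\theta)^{-1/2}\,d\theta$ and $\mathrm{E}(q)=\int_0^{\pi/2}(1-q^2\sin^2\theta)^{1/2}\,d\theta$. $\hat q$ is the unique zero in $[1/\sqrt2,1)$ of $f(q)=(4q^4-5q^2+1)\mathrm{K}(q)+(-8q^4+8q^2-1)\mathrm{E}(q)$; moreover $f>0$ on $[1/\sqrt2,\hat q)$ and $f<0$ on $(\hat q,1)$. *)

theory Defs
  imports "HOL-Analysis.Analysis"
begin

definition ellK :: "real \<Rightarrow> real" where
  "ellK q = integral {0..pi/2} (\<lambda>\<theta>. 1 / sqrt (1 - q^2 * (sin \<theta>)^2))"

definition ellE :: "real \<Rightarrow> real" where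
  "ellE q = integral {0..pi/2} (\<lambda>\<theta>. sqrt (1 - q^2 * (sin \<theta>)^2))"

definition fq :: "real \<Rightarrow> real" where
  "fq q = (4*q^4 - 5*q^2 + 1) * ellK q + (-8*q^4 + 8*q^2 - 1) * ellE q"

definition qhat :: real where
  "qhat = (THE q. q \<in> {1/sqrt 2..<1} \<and> fq q = 0)"

end

theory Submission
  imports Defs
begin


lemma int_sin2: "((\<lambda>t. sin t ^ 2) has_integral pi/4) {0..pi/2}"
proof -
  have "((\<lambda>t. sin t ^ 2) has_integral ((\<lambda>t. t/2 - sin t * cos t / 2) (pi/2) - (\<lambda>t. t/2 - sin t * cos t / 2) 0)) {0..pi/2}"
  proof (rule fundamental_theorem_of_calculus)
    show "0 \<le> pi/2" by simp
    fix x assume "x \<in> {0..pi/2}"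
    have "((\<lambda>t. t/2 - sin t * cos t / 2) has_real_derivative (1/2 - (cos x * cos x - sin x * sin x)/2)) (at x)"
      by (auto intro!: derivative_eq_intros simp: field_simps)
    moreover have "1/2 - (cos x * cos x - sin x * sin x)/2 = sin x ^ 2"
      using sin_cos_squared_add[of x] by algebra
    ultimately show "((\<lambda>t. t/2 - sin t * cos t / 2) has_vector_derivative sin x ^ 2) (at x within {0..pi/2})"
      by (auto simp: has_real_derivative_iff_has_vector_derivative[symmetric] intro: has_field_derivative_at_within)
  qed
  then show ?thesis by simp
qed

lemma int_sin4: "((\<lambda>t. sin t ^ 4) has_integral 3*pi/16) {0..pi/2}"
proof -
  define F where "F = (\<lambda>t::real. - (sin t ^ 3 * cos t)/4 + 3/4 * (t/2 - sin t * cos t / 2))"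
  have "((\<lambda>t. sin t ^ 4) has_integral (F (pi/2) - F 0)) {0..pi/2}"
  proof (rule fundamental_theorem_of_calculus)
    show "0 \<le> pi/2" by simp
    fix x assume "x \<in> {0..pi/2}"
    have "(F has_real_derivative (- (3 * sin x ^ 2 * cos x * cos x - sin x ^ 3 * sin x)/4 + 3/4*(1/2 - (cos x * cos x - sin x * sin x)/2))) (at x)"
      unfolding F_def by (auto intro!: derivative_eq_intros simp: field_simps)
    moreover have "- (3 * sin x ^ 2 * cos x * cos x - sin x ^ 3 * sin x)/4 + 3/4*(1/2 - (cos x * cos x - sin x * sin x)/2) = sin x ^ 4"
    proof -
      have c: "cos x * cos x = 1 - sin x ^ 2" using sin_cos_squared_add[of x] by (simp add: power2_eq_square)
      show ?thesis using c by algebra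
    qed
    ultimately show "(F has_vector_derivative sin x ^ 4) (at x within {0..pi/2})"
      by (auto simp: has_real_derivative_iff_has_vector_derivative[symmetric] intro: has_field_derivative_at_within)
  qed
  moreover have "F (pi/2) - F 0 = 3*pi/16" by (simp add: F_def)
  ultimately show ?thesis by simp
qed

lemma int_sin6: "((\<lambda>t. sin t ^ 6) has_integral 5*pi/32) {0..pi/2}"
proof -
  define F where "F = (\<lambda>t::real. - (sin t ^ 5 * cos t)/6 + 5/6*(- (sin t ^ 3 * cos t)/4 + 3/4 * (t/2 - sin t * cos t / 2)))"
  have "((\<lambda>t. sin t ^ 6) has_integral (F (pi/2) - F 0)) {0..pi/2}"
  proof (rule fundamental_theorem_of_calculus)
    show "0 \<le> pi/2" by simp
    fix x assume "x \<in> {0..pi/2}"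
    have "(F has_real_derivative (- (5 * sin x ^ 4 * cos x * cos x - sin x ^ 5 * sin x)/6 + 5/6*(- (3 * sin x ^ 2 * cos x * cos x - sin x ^ 3 * sin x)/4 + 3/4*(1/2 - (cos x * cos x - sin x * sin x)/2)))) (at x)"
      unfolding F_def by (auto intro!: derivative_eq_intros simp: field_simps)
    moreover have "- (5 * sin x ^ 4 * cos x * cos x - sin x ^ 5 * sin x)/6 + 5/6*(- (3 * sin x ^ 2 * cos x * cos x - sin x ^ 3 * sin x)/4 + 3/4*(1/2 - (cos x * cos x - sin x * sin x)/2)) = sin x ^ 6"
    proof -
      have c: "cos x * cos x = 1 - sin x ^ 2" using sin_cos_squared_add[of x] by (simp add: power2_eq_square)
      show ?thesis using c by algebra
    qed
    ultimately show "(F has_vector_derivative sin x ^ 6) (at x within {0..pi/2})"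
      by (auto simp: has_real_derivative_iff_has_vector_derivative[symmetric] intro: has_field_derivative_at_within)
  qed
  moreover have "F (pi/2) - F 0 = 5*pi/32" by (simp add: F_def)
  ultimately show ?thesis by simp
qed



definition gw :: "real \<Rightarrow> real \<Rightarrow> real" where
  "gw m t = 1 / sqrt (1 - m * sin t ^ 2)"
definition I0 :: "real \<Rightarrow> real" where "I0 m = integral {0..pi/2} (gw m)"
definition I1 :: "real \<Rightarrow> real" where "I1 m = integral {0..pi/2} (\<lambda>t. sin t ^ 2 * gw m t)"
definition H :: "real \<Rightarrow> real" where
  "H m = (3 - 4*m) * I0 m + (8*m^2 - 8*m + 1) * I1 m"

lemma D_pos: fixes t :: real assumes "0 \<le> m" "m < 1" shows "1 - m * sin t ^ 2 > 0"
proof -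
  have "sin t ^ 2 \<le> 1" using sin_cos_squared_add[of t] zero_le_power2[of "cos t"] by linarith
  then have "m * sin t ^ 2 \<le> m" using assms by (simp add: mult_left_le)
  then show ?thesis using assms by simp
qed

lemma gw_ge1: assumes "0 \<le> m" "m < 1" shows "gw m t \<ge> 1"
proof -
  have p: "1 - m * sin t ^ 2 > 0" using D_pos assms by blast
  have "1 - m * sin t ^ 2 \<le> 1" using assms by simp
  then have "sqrt (1 - m * sin t ^ 2) \<le> 1" by simp
  moreover have "sqrt (1 - m * sin t ^ 2) > 0" using p by simp
  ultimately show ?thesis unfolding gw_def by (simp add: field_simps)
qed

lemma gw_pos: assumes "0 \<le> m" "m < 1" shows "gw m t > 0"
  using gw_ge1[OF assms, of t] by linarith

lemma gw_cont: assumes "0 \<le> m" "m < 1" shows "continuous_on {0..pi/2} (gw m)"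
  unfolding gw_def using D_pos[OF assms]
  by (intro continuous_intros) (auto simp: less_imp_neq[symmetric])

lemma I0_has: assumes "0 \<le> m" "m < 1" shows "(gw m has_integral I0 m) {0..pi/2}"
  unfolding I0_def using gw_cont[OF assms] integrable_continuous_interval integrable_integral by blast

lemma I1_has: assumes "0 \<le> m" "m < 1" shows "((\<lambda>t. sin t ^ 2 * gw m t) has_integral I1 m) {0..pi/2}"
proof -
  have "continuous_on {0..pi/2} (\<lambda>t. sin t ^ 2 * gw m t)"
    using gw_cont[OF assms] by (intro continuous_intros) auto
  then show ?thesis unfolding I1_def using integrable_continuous_interval integrable_integral by blast
qed

lemma H_has: assumes "0 \<le> m" "m < 1"
  shows "((\<lambda>t. (3 - 4*m) * gw m t + (8*m^2 - 8*m + 1) * (sin t ^ 2 * gw m t)) has_integral H m) {0..pi/2}"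
  unfolding H_def
  by (intro has_integral_add has_integral_mult_right I0_has I1_has assms)

lemma fq_eq: assumes "0 \<le> q" "q < 1" shows "fq q = q^2 * H (q^2)"
proof -
  define m where "m = q^2"
  have m: "0 \<le> m" "m < 1" using assms by (auto simp: m_def power_less_one_iff)
  have K: "ellK q = I0 m" unfolding ellK_def I0_def gw_def m_def by simp
  have "((\<lambda>t. gw m t - m * (sin t ^ 2 * gw m t)) has_integral (I0 m - m * I1 m)) {0..pi/2}"
    by (intro has_integral_diff has_integral_mult_right I0_has I1_has m)
  moreover have "\<And>t. gw m t - m * (sin t ^ 2 * gw m t) = sqrt (1 - q^2 * (sin t)^2)"
  proof -
    fix t
    have p: "1 - m * sin t ^ 2 > 0" using D_pos[OF m] by blast
    have "gw m t - m * (sin t ^ 2 * gw m t) = (1 - m * sin t ^ 2) / sqrt (1 - m * sin t ^ 2)"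
      unfolding gw_def using p by (simp add: field_simps)
    also have "\<dots> = sqrt (1 - m * sin t ^ 2)" using p
      by (metis less_eq_real_def real_div_sqrt)
    finally show "gw m t - m * (sin t ^ 2 * gw m t) = sqrt (1 - q^2 * (sin t)^2)" by (simp add: m_def)
  qed
  ultimately have E: "ellE q = I0 m - m * I1 m" unfolding ellE_def
    by (simp add: integral_unique)
  have q4: "q^4 = m^2" by (simp add: m_def power2_eq_square power4_eq_xxxx)
  show ?thesis unfolding fq_def K E H_def q4 m_def[symmetric] by (simp add: algebra_simps power2_eq_square power4_eq_xxxx)
qed



lemma w_bounds: fixes x :: real assumes "0 \<le> x" "x \<le> 2/3"
  shows "1 + x/2 \<le> 1 / sqrt (1 - x)" "1 / sqrt (1 - x) \<le> 1 + x/2 + x^2"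
proof -
  have s: "sqrt (1 - x) > 0" using assms by simp
  have "(1 + x/2)^2 * (1 - x) = 1 - 3/4*x^2 - x^3/4" by (simp add: field_simps power2_eq_square power3_eq_cube)
  moreover have "x^3 \<ge> 0" using assms by simp
  moreover have "x^2 \<ge> 0" by simp
  ultimately have "(1 + x/2)^2 * (1 - x) \<le> 1" by linarith
  then have "sqrt ((1 + x/2)^2 * (1 - x)) \<le> 1" by simp
  then have "(1 + x/2) * sqrt (1 - x) \<le> 1" using assms by (simp add: real_sqrt_mult)
  then show "1 + x/2 \<le> 1 / sqrt (1 - x)" using s by (simp add: field_simps)
  have "(1 + x/2 + x^2)^2 * (1 - x) = 1 + x^2 * (5/4 - 5/4*x - x^3)" by (simp add: field_simps power2_eq_square power3_eq_cube)
  moreover have "x^3 \<le> (2/3)^3" using assms by (intro power_mono) auto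
  moreover have "(2/3::real)^3 = 8/27" by (simp add: power3_eq_cube)
  ultimately have "5/4 - 5/4*x - x^3 \<ge> 0" using assms by linarith
  then have "x^2 * (5/4 - 5/4*x - x^3) \<ge> 0" by (intro mult_nonneg_nonneg) auto
  then have "(1 + x/2 + x^2)^2 * (1 - x) \<ge> 1" using \<open>(1 + x/2 + x^2)^2 * (1 - x) = _\<close> by linarith
  then have "sqrt ((1 + x/2 + x^2)^2 * (1 - x)) \<ge> 1" by simp
  then have "(1 + x/2 + x^2) * sqrt (1 - x) \<ge> 1" using assms
    by (simp add: real_sqrt_mult)
  then show "1 / sqrt (1 - x) \<le> 1 + x/2 + x^2" using s by (simp add: field_simps)
qed

lemma sin2_bounds: "0 \<le> sin t ^ 2" "sin t ^ 2 \<le> (1::real)"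
  using sin_cos_squared_add[of t] zero_le_power2[of "cos t"] zero_le_power2[of "sin t"] by linarith+

lemma gw_bounds: assumes "0 \<le> m" "m \<le> 2/3"
  shows "1 + m * sin t ^ 2 / 2 \<le> gw m t" "gw m t \<le> 1 + m * sin t ^ 2 / 2 + (m * sin t ^ 2)^2"
proof -
  have "m * sin t ^ 2 \<le> m * 1" by (rule mult_left_mono) (use sin2_bounds[of t] assms in auto)
  then have "0 \<le> m * sin t ^ 2" "m * sin t ^ 2 \<le> 2/3"
    using assms sin2_bounds[of t] by auto
  then show "1 + m * sin t ^ 2 / 2 \<le> gw m t" "gw m t \<le> 1 + m * sin t ^ 2 / 2 + (m * sin t ^ 2)^2"
    using w_bounds[of "m * sin t ^ 2"] unfolding gw_def by auto
qed

lemma poly_int: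
  "((\<lambda>t. p0 + p1 * sin t ^ 2 + p2 * sin t ^ 4 + p3 * sin t ^ 6) has_integral
     (p0 * (pi/2) + p1 * (pi/4) + p2 * (3*pi/16) + p3 * (5*pi/32))) {0..pi/2}"
proof -
  have c: "((\<lambda>t. p0) has_integral p0 * (pi/2)) {0..pi/2}"
    using has_integral_const_real[of p0 0 "pi/2"] by (simp add: mult.commute)
  show ?thesis
    by (intro has_integral_add c has_integral_mult_right int_sin2 int_sin4 int_sin6)
qed

lemma H_has': assumes "0 \<le> m" "m < 1" "a = 3 - 4*m" "b = 8*m^2 - 8*m + 1"
  shows "((\<lambda>t. a * gw m t + b * (sin t ^ 2 * gw m t)) has_integral H m) {0..pi/2}"
  using H_has[OF assms(1,2)] assms(3,4) by simp

lemma H35: "H (3/5) > 0"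
proof -
  let ?p = "\<lambda>t::real. 3/5 + (-37/50) * sin t ^ 2 + (-69/250) * sin t ^ 4 + (-207/625) * sin t ^ 6"
  have "?p t \<le> 3/5 * gw (3/5) t + (-23/25) * (sin t ^ 2 * gw (3/5) t)" for t
  proof -
    define y where "y = sin t ^ 2"
    define G where "G = gw (3/5) t"
    have y: "0 \<le> y" "y \<le> 1" using sin2_bounds[of t] by (auto simp: y_def)
    have l: "1 + 3/5 * y / 2 \<le> G" and u: "G \<le> 1 + 3/5 * y / 2 + (3/5 * y)^2"
      using gw_bounds[of "3/5" t] by (auto simp: y_def G_def)
    have s4: "sin t ^ 4 = y^2" "sin t ^ 6 = y^3" by (simp_all add: y_def flip: power_mult)
    have yu: "y * G \<le> y * (1 + 3/5 * y / 2 + (3/5 * y)^2)" using u y by (simp add: mult_left_mono)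
    have "?p t = 3/5 * (1 + 3/5 * y / 2) - 23/25 * (y * (1 + 3/5 * y / 2 + (3/5 * y)^2))"
      unfolding s4 y_def[symmetric] by algebra
    also have "\<dots> \<le> 3/5 * G - 23/25 * (y * G)"
      by (intro diff_mono mult_left_mono l yu) simp_all
    also have "\<dots> = 3/5 * gw (3/5) t + (-23/25) * (sin t ^ 2 * gw (3/5) t)"
      by (simp add: y_def G_def)
    finally show ?thesis .
  qed
  note pw = this
  have hh: "((\<lambda>t. 3/5 * gw (3/5) t + (-23/25) * (sin t ^ 2 * gw (3/5) t)) has_integral H (3/5)) {0..pi/2}"
    by (rule H_has') (simp_all add: power2_eq_square)
  have "(3/5 * (pi/2) + (-37/50) * (pi/4) + (-69/250) * (3*pi/16) + (-207/625) * (5*pi/32)) \<le> H (3/5)"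
    by (rule has_integral_le[OF poly_int hh]) (rule pw)
  moreover have "(3/5 * (pi/2) + (-37/50) * (pi/4) + (-69/250) * (3*pi/16) + (-207/625) * (5*pi/32)) = 23/1000 * (pi/2)"
    by (simp add: field_simps)
  ultimately show ?thesis using pi_gt_zero by linarith
qed

lemma H23: "H (2/3) < 0"
proof -
  let ?p = "\<lambda>t::real. 1/3 + (-2/3) * sin t ^ 2 + (-1/9) * sin t ^ 4 + 0 * sin t ^ 6"
  have "1/3 * gw (2/3) t + (-7/9) * (sin t ^ 2 * gw (2/3) t) \<le> ?p t" for t
  proof -
    define y where "y = sin t ^ 2"
    define G where "G = gw (2/3) t"
    have y: "0 \<le> y" "y \<le> 1" using sin2_bounds[of t] by (auto simp: y_def)
    have l: "1 + 2/3 * y / 2 \<le> G" and u: "G \<le> 1 + 2/3 * y / 2 + (2/3 * y)^2"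
      using gw_bounds[of "2/3" t] by (auto simp: y_def G_def)
    have s4: "sin t ^ 4 = y^2" by (simp_all add: y_def flip: power_mult)
    have yl: "y * (1 + 2/3 * y / 2) \<le> y * G" using l y by (simp add: mult_left_mono)
    have "1/3 * gw (2/3) t + (-7/9) * (sin t ^ 2 * gw (2/3) t) = 1/3 * G - 7/9 * (y * G)"
      by (simp add: y_def G_def)
    also have "\<dots> \<le> 1/3 * (1 + 2/3 * y / 2 + (2/3 * y)^2) - 7/9 * (y * (1 + 2/3 * y / 2))"
      by (intro diff_mono mult_left_mono u yl) simp_all
    also have "\<dots> = ?p t"
      unfolding s4 y_def[symmetric] by algebra
    finally show ?thesis .
  qed
  note pw = this
  have hh: "((\<lambda>t. 1/3 * gw (2/3) t + (-7/9) * (sin t ^ 2 * gw (2/3) t)) has_integral H (2/3)) {0..pi/2}"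
    by (rule H_has') (simp_all add: power2_eq_square)
  have "H (2/3) \<le> (1/3 * (pi/2) + (-2/3) * (pi/4) + (-1/9) * (3*pi/16) + 0 * (5*pi/32))"
    by (rule has_integral_le[OF hh poly_int]) (rule pw)
  moreover have "(1/3 * (pi/2) + (-2/3) * (pi/4) + (-1/9) * (3*pi/16) + 0 * (5*pi/32)) = -1/24 * (pi/2)"
    by (simp add: field_simps)
  ultimately show ?thesis using pi_gt_zero by linarith
qed



lemma b_neg: assumes "1/2 \<le> m" "m \<le> 3/4" shows "8*m^2 - 8*m + 1 < (0::real)"
proof -
  have e: "8*m^2 - 8*m + 1 = 8*(m - 1/2)^2 - 1" by (simp add: field_simps power2_eq_square)
  have "(m - 1/2)^2 \<le> (1/4)^2" using assms by (intro power_mono) auto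
  moreover have "(1/4::real)^2 = 1/16" by (simp add: power2_eq_square)
  ultimately show ?thesis unfolding e by linarith
qed

lemma I0_pos: assumes "0 \<le> m" "m < 1" shows "I0 m \<ge> pi/2"
proof -
  have "((\<lambda>t::real. 1::real) has_integral pi/2) {0..pi/2}" using has_integral_const_real[of "1::real" 0 "pi/2"] by simp
  then show ?thesis by (rule has_integral_le[OF _ I0_has[OF assms]]) (rule gw_ge1[OF assms])
qed

lemma comp:
  assumes m1: "1/2 \<le> m1" and m12: "m1 < m2" and m2: "m2 \<le> 3/4" and h1: "H m1 \<le> 0"
  shows "H m2 < 0"
proof -
  define nb1 where "nb1 = -(8*m1^2 - 8*m1 + 1)"
  define nb2 where "nb2 = -(8*m2^2 - 8*m2 + 1)"
  have nb1: "nb1 > 0" unfolding nb1_def using b_neg[of m1] m1 m12 m2 by auto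
  have nb2: "nb2 > 0" unfolding nb2_def using b_neg[of m2] m1 m12 m2 by auto
  define c1 where "c1 = (3 - 4*m1) / nb1"
  define c2 where "c2 = (3 - 4*m2) / nb2"
  have m1': "0 \<le> m1" "m1 < 1" and m2': "0 \<le> m2" "m2 < 1" using m1 m12 m2 by auto
  have c1: "0 \<le> c1" "c1 \<le> 1"
  proof -
    show "0 \<le> c1" unfolding c1_def using nb1 m12 m2 by auto
    have "3 - 4*m1 \<le> nb1" unfolding nb1_def
    proof -
      have "nb1 - (3 - 4*m1) = -4*(2*m1 - 1)*(m1 - 1)" unfolding nb1_def by (simp add: field_simps power2_eq_square)
      moreover have "(2*m1 - 1)*(m1 - 1) \<le> 0" using m1' m1 by (intro mult_nonneg_nonpos) auto
      ultimately show "3 - 4*m1 \<le> -(8*m1^2 - 8*m1 + 1)" unfolding nb1_def by linarith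
    qed
    then show "c1 \<le> 1" unfolding c1_def using nb1 by simp
  qed
  have c21: "c2 < c1"
  proof -
    have e: "(3 - 4*m1)*nb2 - (3 - 4*m2)*nb1 = (m2 - m1) * (32*((m1 - 3/4)*(m2 - 3/4)) + 2)"
      unfolding nb1_def nb2_def by (simp add: field_simps power2_eq_square)
    have "(m1 - 3/4)*(m2 - 3/4) \<ge> 0" using m12 m2 by (intro mult_nonpos_nonpos) auto
    then have "32*((m1 - 3/4)*(m2 - 3/4)) + 2 > 0" by linarith
    then have "(m2 - m1) * (32*((m1 - 3/4)*(m2 - 3/4)) + 2) > 0" using m12 by (intro mult_pos_pos) auto
    then have "(3 - 4*m2)*nb1 < (3 - 4*m1)*nb2" using e by linarith
    then show ?thesis unfolding c1_def c2_def using nb1 nb2 by (simp add: field_simps)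
  qed
  have E1: "1 - m1 * c1 > 0" "1 - m2 * c1 > 0"
    using c1 m1' m2' mult_left_le[of c1 m1] mult_left_le[of c1 m2] by auto
  define k where "k = sqrt ((1 - m1*c1) / (1 - m2*c1))"
  have k0: "k \<ge> 0" unfolding k_def using E1 by simp
  have pw: "(c1 - sin t ^ 2) * gw m2 t \<le> k * ((c1 - sin t ^ 2) * gw m1 t)" for t
  proof -
    define x where "x = sin t ^ 2"
    have x: "0 \<le> x" "x \<le> 1" using sin2_bounds[of t] by (auto simp: x_def)
    have D: "1 - m1 * x > 0" "1 - m2 * x > 0" using D_pos[OF m1'] D_pos[OF m2'] by (auto simp: x_def)
    have s1: "sqrt (1 - m1*x) > 0" and s2: "sqrt (1 - m2*x) > 0" using D by auto
    have g2: "gw m2 t = sqrt ((1 - m1*x)/(1 - m2*x)) * gw m1 t"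
      unfolding gw_def x_def[symmetric] real_sqrt_divide using s1 s2 by simp
    have key: "(1 - m1*x)*(1 - m2*c1) - (1 - m1*c1)*(1 - m2*x) = (m2 - m1)*(x - c1)" by (simp add: field_simps power2_eq_square)
    have gp: "gw m1 t > 0" using gw_pos[OF m1'] by blast
    show ?thesis
    proof (cases "x \<le> c1")
      case True
      have "(1 - m1*x)*(1 - m2*c1) \<le> (1 - m1*c1)*(1 - m2*x)"
        using key True m12 mult_nonneg_nonpos[of "m2 - m1" "x - c1"] by auto
      then have "(1 - m1*x)/(1 - m2*x) \<le> (1 - m1*c1) / (1 - m2*c1)"
        using D E1 by (simp add: divide_simps)
      then have "sqrt ((1 - m1*x)/(1 - m2*x)) \<le> k" unfolding k_def by simp
      then have "sqrt ((1 - m1*x)/(1 - m2*x)) * ((c1 - x) * gw m1 t) \<le> k * ((c1 - x) * gw m1 t)"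
        using True gp by (intro mult_right_mono) auto
      then show ?thesis unfolding g2 x_def[symmetric] by (simp add: algebra_simps)
    next
      case False
      have "(m2 - m1)*(x - c1) > 0" using False m12 by (intro mult_pos_pos) auto
      then have "(1 - m1*x)*(1 - m2*c1) \<ge> (1 - m1*c1)*(1 - m2*x)"
        using key by linarith
      then have "(1 - m1*x)/(1 - m2*x) \<ge> (1 - m1*c1) / (1 - m2*c1)"
        using D E1 by (simp add: divide_simps)
      then have "sqrt ((1 - m1*x)/(1 - m2*x)) \<ge> k" unfolding k_def by simp
      then have "sqrt ((1 - m1*x)/(1 - m2*x)) * ((c1 - x) * gw m1 t) \<le> k * ((c1 - x) * gw m1 t)"
      proof -
        have "(c1 - x) * gw m1 t \<le> 0" using False gp by (intro mult_nonpos_nonneg) auto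
        then show ?thesis using \<open>sqrt _ \<ge> k\<close> by (intro mult_right_mono_neg) auto
      qed
      then show ?thesis unfolding g2 x_def[symmetric] by (simp add: algebra_simps)
    qed
  qed
  have i2: "((\<lambda>t. (c1 - sin t ^ 2) * gw m2 t) has_integral (c1 * I0 m2 - I1 m2)) {0..pi/2}"
  proof -
    have "((\<lambda>t. c1 * gw m2 t - sin t ^ 2 * gw m2 t) has_integral (c1 * I0 m2 - I1 m2)) {0..pi/2}"
      by (intro has_integral_diff has_integral_mult_right I0_has I1_has m2')
    then show ?thesis by (simp add: algebra_simps)
  qed
  have i1: "((\<lambda>t. k * ((c1 - sin t ^ 2) * gw m1 t)) has_integral k * (c1 * I0 m1 - I1 m1)) {0..pi/2}"
  proof -
    have "((\<lambda>t. c1 * gw m1 t - sin t ^ 2 * gw m1 t) has_integral (c1 * I0 m1 - I1 m1)) {0..pi/2}"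
      by (intro has_integral_diff has_integral_mult_right I0_has I1_has m1')
    then have "((\<lambda>t. (c1 - sin t ^ 2) * gw m1 t) has_integral (c1 * I0 m1 - I1 m1)) {0..pi/2}"
      by (simp add: algebra_simps)
    then show ?thesis by (rule has_integral_mult_right)
  qed
  have le: "c1 * I0 m2 - I1 m2 \<le> k * (c1 * I0 m1 - I1 m1)"
    by (rule has_integral_le[OF i2 i1]) (rule pw)
  have r1: "3 - 4*m1 = c1 * nb1" unfolding c1_def using nb1 by simp
  have r2: "8*m1^2 - 8*m1 + 1 = - nb1" unfolding nb1_def by simp
  have "H m1 = nb1 * (c1 * I0 m1 - I1 m1)"
    unfolding H_def r1 r2 by (simp add: algebra_simps)
  then have "c1 * I0 m1 - I1 m1 \<le> 0" using h1 nb1 by (simp add: mult_le_0_iff)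
  then have "k * (c1 * I0 m1 - I1 m1) \<le> 0" using k0 by (simp add: mult_nonneg_nonpos)
  then have X: "c1 * I0 m2 - I1 m2 \<le> 0" using le by linarith
  have "I0 m2 > 0" using I0_pos[OF m2'] pi_gt_zero by linarith
  then have Y: "(c2 - c1) * I0 m2 < 0" using c21 by (simp add: mult_neg_pos)
  have r3: "3 - 4*m2 = c2 * nb2" unfolding c2_def using nb2 by simp
  have r4: "8*m2^2 - 8*m2 + 1 = - nb2" unfolding nb2_def by simp
  have "H m2 = nb2 * ((c1 * I0 m2 - I1 m2) + (c2 - c1) * I0 m2)"
    unfolding H_def r3 r4 by (simp add: algebra_simps)
  moreover have "(c1 * I0 m2 - I1 m2) + (c2 - c1) * I0 m2 < 0" using X Y by linarith
  ultimately show ?thesis using nb2 by (simp add: mult_pos_neg)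
qed

lemma tail: assumes "3/4 \<le> m" "m < 1" shows "H m < 0"
proof -
  define a where "a = 3 - 4*m"
  define b where "b = 8*m^2 - 8*m + 1"
  have m': "0 \<le> m" "m < 1" using assms by auto
  have a: "a \<le> 0" unfolding a_def using assms by simp
  have ab: "a + b < 0"
  proof -
    have e: "a + b = 4*((2*m - 1)*(m - 1))" unfolding a_def b_def by (simp add: field_simps power2_eq_square)
    have "(2*m - 1)*(m - 1) < 0" using assms by (intro mult_pos_neg) auto
    then show ?thesis unfolding e by linarith
  qed
  have pw: "a * gw m t + b * (sin t ^ 2 * gw m t) \<le> (a + b) * sin t ^ 2" for t
  proof -
    define y where "y = sin t ^ 2"
    have y: "0 \<le> y" "y \<le> 1" using sin2_bounds[of t] by (auto simp: y_def)
    have g: "gw m t \<ge> 1" using gw_ge1[OF m'] by blast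
    have "a * (1 - y) \<le> 0" using a y by (intro mult_nonpos_nonneg) auto
    then have "a \<le> a * y" by (simp add: algebra_simps)
    then have "a + b*y \<le> (a+b)*y" by (simp add: algebra_simps)
    then have "gw m t * (a + b*y) \<le> gw m t * ((a+b)*y)" using g by (intro mult_left_mono) auto
    also have "\<dots> \<le> 1 * ((a+b)*y)"
      using g ab y by (intro mult_right_mono_neg) (auto simp: mult_nonpos_nonneg)
    finally show ?thesis by (simp add: y_def algebra_simps)
  qed
  have hh: "((\<lambda>t. a * gw m t + b * (sin t ^ 2 * gw m t)) has_integral H m) {0..pi/2}"
    by (rule H_has'[OF m']) (simp_all add: a_def b_def)
  have "H m \<le> (a + b) * (pi/4)"
    by (rule has_integral_le[OF hh has_integral_mult_right[OF int_sin2]]) (rule pw)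
  moreover have "(a + b) * (pi/4) < 0" using ab pi_gt_zero by (simp add: mult_neg_pos)
  ultimately show ?thesis by linarith
qed



lemma Dq_pos: fixes q t :: real assumes "\<bar>q\<bar> < 1" shows "1 - q^2 * sin t ^ 2 > 0"
proof -
  have "q^2 < 1" using assms by (simp add: abs_square_less_1)
  then show ?thesis using D_pos[of "q^2" t] by simp
qed

lemma cont_K: "continuous_on {-1<..<1} ellK"
proof -
  have "continuous_on ({-1<..<1} \<times> cbox 0 (pi/2)) (\<lambda>p::real\<times>real. 1 / sqrt (1 - (fst p)^2 * (sin (snd p))^2))"
  proof (intro continuous_intros ballI)
    fix p :: "real \<times> real" assume "p \<in> {-1<..<1} \<times> cbox 0 (pi/2)"
    then have "\<bar>fst p\<bar> < 1" by auto
    then show "sqrt (1 - (fst p)^2 * (sin (snd p))^2) \<noteq> 0" using Dq_pos[of "fst p" "snd p"] by simp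
  qed
  then have "continuous_on {-1<..<1} (\<lambda>q. integral (cbox 0 (pi/2)) (\<lambda>t. 1 / sqrt (1 - q^2 * (sin t)^2)))"
    by (intro integral_continuous_on_param) (simp add: case_prod_unfold)
  then show ?thesis unfolding ellK_def[abs_def] by simp
qed

lemma cont_E: "continuous_on {-1<..<1} ellE"
proof -
  have "continuous_on ({-1<..<1} \<times> cbox 0 (pi/2)) (\<lambda>p::real\<times>real. sqrt (1 - (fst p)^2 * (sin (snd p))^2))"
    by (intro continuous_intros)
  then have "continuous_on {-1<..<1} (\<lambda>q. integral (cbox 0 (pi/2)) (\<lambda>t. sqrt (1 - q^2 * (sin t)^2)))"
    by (intro integral_continuous_on_param) (simp add: case_prod_unfold)
  then show ?thesis unfolding ellE_def[abs_def] by simp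
qed

lemma cont_fq: "continuous_on {-1<..<1} fq"
  unfolding fq_def[abs_def]
  by (intro continuous_intros continuous_on_compose2[OF cont_K] continuous_on_compose2[OF cont_E]) auto

lemma key:
  assumes "1/2 \<le> m" "m < 1" "H m = 0" shows "3/5 < m \<and> m < 2/3"
proof (rule ccontr)
  assume "\<not> (3/5 < m \<and> m < 2/3)"
  then consider "m < 3/5" | "m = 3/5" | "2/3 \<le> m \<and> m < 3/4" | "3/4 \<le> m" by linarith
  then show False
  proof cases
    case 1 then have "H (3/5) < 0" using comp[of m "3/5"] assms by auto
    then show False using H35 by linarith
  next
    case 2 then show False using H35 assms(3) by (metis less_irrefl)
  next
    case 3
    then consider "m = 2/3" | "2/3 < m" "m \<le> 3/4" by linarith
    then show False
    proof cases
      case 1 then show False using H23 assms(3) by (metis less_irrefl)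
    next
      case 2 then have "H m < 0" using comp[of "2/3" m] H23 by auto
      then show False using assms by simp
    qed
  next
    case 4 then show False using tail[of m] assms by simp
  qed
qed

lemma P_key:
  assumes "q \<in> {1/sqrt 2..<1}" "fq q = 0" shows "3/5 < q^2 \<and> q^2 < 2/3"
proof -
  have q0: "0 < q" using assms(1) by (auto intro: less_le_trans[of 0 "1/sqrt 2"])
  have q1: "q < 1" using assms(1) by auto
  have "(1/sqrt 2)^2 \<le> q^2" using assms(1) by (intro power_mono) auto
  then have m1: "1/2 \<le> q^2" by (simp add: power_divide)
  have m2: "q^2 < 1" using q0 q1 by (simp add: power_less_one_iff)
  have "q^2 * H (q^2) = 0" using fq_eq[of q] q0 q1 assms(2) by simp
  then have "H (q^2) = 0" using q0 by simp
  then show ?thesis using key m1 m2 by blast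
qed

theorem lemma2p5:
  shows "3/5 < qhat^2 \<and> qhat^2 < 2/3"
proof -
  define P where "P = (\<lambda>q. q \<in> {1/sqrt 2..<1} \<and> fq q = 0)"
  have ex: "\<exists>q. P q"
  proof -
    define a where "a = sqrt (3/5)"
    define b where "b = sqrt (2/3)"
    have ab: "a \<le> b" unfolding a_def b_def by simp
    have a2: "a^2 = 3/5" and b2: "b^2 = 2/3" unfolding a_def b_def by simp_all
    have a0: "0 \<le> a" "a < 1" and b0: "0 \<le> b" "b < 1" unfolding a_def b_def by simp_all
    have fa: "fq a > 0" using fq_eq[OF a0] a2 H35 by simp
    have fb: "fq b < 0" using fq_eq[OF b0] b2 H23 by (simp add: mult_pos_neg)
    have "continuous_on {a..b} fq"
      by (rule continuous_on_subset[OF cont_fq]) (use a0 b0 in auto)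
    then obtain x where x: "a \<le> x" "x \<le> b" "fq x = 0"
      using IVT2'[of fq b 0 a] fa fb ab by auto
    have "1/sqrt 2 = sqrt (1/2)" by (simp add: real_sqrt_divide)
    also have "\<dots> \<le> a" unfolding a_def by simp
    finally have "1/sqrt 2 \<le> x" using x by linarith
    moreover have "x < 1" using x b0 by linarith
    ultimately show ?thesis unfolding P_def using x by auto
  qed
  have uniq: "q1 = q2" if "P q1" "P q2" for q1 q2
  proof (rule ccontr)
    assume ne: "q1 \<noteq> q2"
    have k1: "3/5 < q1^2 \<and> q1^2 < 2/3" using P_key that(1) unfolding P_def by blast
    have k2: "3/5 < q2^2 \<and> q2^2 < 2/3" using P_key that(2) unfolding P_def by blast
    have p1: "0 \<le> q1" "q1 < 1" and p2: "0 \<le> q2" "q2 < 1" using that unfolding P_def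
      by (auto intro: order_trans[of 0 "1/sqrt 2"])
    have h1: "H (q1^2) = 0" using fq_eq[OF p1] that(1) k1 unfolding P_def by auto
    have h2: "H (q2^2) = 0" using fq_eq[OF p2] that(2) k2 unfolding P_def by auto
    have "q1 < q2 \<or> q2 < q1" using ne by linarith
    then show False
    proof
      assume "q1 < q2"
      then have "q1^2 < q2^2" using p1 by (intro power_strict_mono) auto
      then have "H (q2^2) < 0" using comp[of "q1^2" "q2^2"] k1 k2 h1 by auto
      then show False using h2 by simp
    next
      assume "q2 < q1"
      then have "q2^2 < q1^2" using p2 by (intro power_strict_mono) auto
      then have "H (q1^2) < 0" using comp[of "q2^2" "q1^2"] k1 k2 h2 by auto
      then show False using h1 by simp
    qed
  qed
  obtain q0 where q0: "P q0" using ex by blast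
  have "P qhat" unfolding qhat_def P_def[symmetric]
    by (rule theI[of P q0]) (use q0 uniq in auto)
  then show ?thesis using P_key unfolding P_def by blast
qed


end
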